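(* Let $\mathbf{x}\in\Sigma_q^*$ with $|\mathbf{x}|\ge 5$ and let $\mathbf{x}'\in D^*(\mathbf{x})$. Suppose $\mathbf{x}=\mathbf{r}\,ab\,\mathbf{t}\,de\,\mathbf{s}$ with $a,b,d,e\in\Sigma_q$, $\mathbf{r},\mathbf{t},\mathbf{s}\in\Sigma_q^*$ and $\mathbf{t}$ nonempty. Then there exist $\mathbf{u},\mathbf{w},\mathbf{v}\in\Sigma_q^*$ such that $\mathbf{x}'=\mathbf{u}\,ab\,\mathbf{w}\,de\,\mathbf{v}$, $\mathbf{u}ab\in D^*(\mathbf{r}ab)$, $ab\mathbf{w}de\in D^*(ab\mathbf{t}de)$, and $de\mathbf{v}\in D^*(de\mathbf{s})$.
   Context: $\Sigma_q=\{0,1,\dots,q-1\}$ with $q\ge 3$; $\Sigma_q^*$ is the set of all finite strings over $\Sigma_q$ (including the empty string). A tandem duplication of length $k$ transforms a string $\mathbf{u}\mathbf{v}\mathbf{w}$ with $|\mathbf{v}|=k$ into $\mathbf{u}\mathbf{v}\mathbf{v}\mathbf{w}$; a $\le 3$-TD is a tandem duplication of length $1$, $2$ or $3$. $D^*(\mathbf{x})$ denotes the set of strings obtainable from $\mathbf{x}$ by finitely many (possibly zero) $\le3$-TDs. *)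

theory Defs
  imports Main
begin

definition in_Sigma_star :: "nat \<Rightarrow> nat list \<Rightarrow> bool" where
  "in_Sigma_star q x \<longleftrightarrow> (\<forall>c\<in>set x. c < q)"

definition td_step :: "nat list \<Rightarrow> nat list \<Rightarrow> bool" where
  "td_step x y \<longleftrightarrow> (\<exists>u v w. x = u @ v @ w \<and> y = u @ v @ v @ w \<and> 1 \<le> length v \<and> length v \<le> 3)"

definition Dstar :: "nat list \<Rightarrow> nat list set" where
  "Dstar x = {y. td_step\<^sup>*\<^sup>* x y}"

end

theory Submission
  imports Defs
begin

lemma td_char: "td_step X Y \<longleftrightarrow> (\<exists>i k. 1 \<le> k \<and> k \<le> 3 \<and> i + k \<le> length X \<and> Y = take (i+k) X @ drop i X)"
proof
  assume "td_step X Y"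
  then obtain u v w where h: "X = u @ v @ w" "Y = u @ v @ v @ w" "1 \<le> length v" "length v \<le> 3"
    unfolding td_step_def by blast
  show "\<exists>i k. 1 \<le> k \<and> k \<le> 3 \<and> i + k \<le> length X \<and> Y = take (i+k) X @ drop i X"
    by (rule exI[of _ "length u"], rule exI[of _ "length v"]) (use h in simp)
next
  assume "\<exists>i k. 1 \<le> k \<and> k \<le> 3 \<and> i + k \<le> length X \<and> Y = take (i+k) X @ drop i X"
  then obtain i k where h: "1 \<le> k" "k \<le> 3" "i + k \<le> length X" "Y = take (i+k) X @ drop i X" by blast
  have X: "X = take i X @ take k (drop i X) @ drop (i+k) X"
    by (metis append.assoc append_take_drop_id drop_drop add.commute take_add)
  have Y: "Y = take i X @ take k (drop i X) @ take k (drop i X) @ drop (i+k) X"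
    using h(4) by (metis append.assoc append_take_drop_id drop_drop add.commute take_add)
  have "length (take k (drop i X)) = k" using h by simp
  then show "td_step X Y" unfolding td_step_def using X Y h by metis
qed

lemma td_set: "td_step X Y \<Longrightarrow> set Y = set X"
  unfolding td_step_def by auto

lemma star_set: "td_step\<^sup>*\<^sup>* X Y \<Longrightarrow> set Y = set X"
  by (induction rule: rtranclp_induct) (auto dest: td_set)

lemma td_len: "td_step X Y \<Longrightarrow> length Y > length X"
  unfolding td_step_def by auto

lemma split2:
  assumes "td_step (L @ [a,b] @ R) Y"
  shows "(\<exists>L'. td_step (L@[a,b]) (L'@[a,b]) \<and> Y = L'@[a,b]@R) \<or>
         (\<exists>R'. td_step ([a,b]@R) ([a,b]@R') \<and> Y = L@[a,b]@R')"
proof -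
  define X where "X = L @ [a,b] @ R"
  obtain i k where h: "1 \<le> k" "k \<le> 3" "i + k \<le> length X" "Y = take (i+k) X @ drop i X"
    using assms td_char X_def by metis
  show ?thesis
  proof (cases "i \<le> length L \<and> i + k \<le> length L + 2")
    case True
    define L' where "L' = take (i+k) X @ drop i L"
    have e1: "take (i+k) X = take (i+k) (L@[a,b])"
      using True unfolding X_def by (subst append.assoc[symmetric], subst take_append) simp
    have e2: "drop i X = drop i L @ [a,b] @ R" using True unfolding X_def by simp
    have "td_step (L@[a,b]) (L'@[a,b])"
      unfolding td_char L'_def
      by (rule exI[of _ i], rule exI[of _ k]) (use True h e1 in simp)
    moreover have "Y = L'@[a,b]@R" using h(4) e2 L'_def by simp
    ultimately show ?thesis by blast
  next
    case False
    define j where "j = i - length L"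
    define Z where "Z = [a,b] @ R"
    have ij: "i = length L + j" "2 \<le> j + k" using False h unfolding j_def by auto
    have XZ: "X = L @ Z" unfolding X_def Z_def by simp
    have jz: "j + k \<le> length Z" using h(3) ij XZ by simp
    define R' where "R' = drop 2 (take (j+k) Z) @ drop j Z"
    have t2: "take 2 (take (j+k) Z) = [a,b]" using ij(2) unfolding Z_def by (simp add: min_def)
    have "take (j+k) Z = [a,b] @ drop 2 (take (j+k) Z)"
      by (metis append_take_drop_id t2)
    hence ZR: "[a,b] @ R' = take (j+k) Z @ drop j Z" unfolding R'_def by simp
    have "td_step ([a,b]@R) ([a,b]@R')"
      unfolding td_char ZR Z_def[symmetric]
      by (rule exI[of _ j], rule exI[of _ k]) (use h jz in simp)
    moreover have "Y = L@[a,b]@R'"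
      using h(4) ZR unfolding XZ ij by (simp add: add.assoc)
    ultimately show ?thesis by blast
  qed
qed

lemma step3:
  assumes "td_step (u @ [a,b] @ w @ [d,e] @ v) Y"
  shows "\<exists>u' w' v'. Y = u' @ [a,b] @ w' @ [d,e] @ v' \<and>
     td_step\<^sup>*\<^sup>* (u@[a,b]) (u'@[a,b]) \<and>
     td_step\<^sup>*\<^sup>* ([a,b]@w@[d,e]) ([a,b]@w'@[d,e]) \<and>
     td_step\<^sup>*\<^sup>* ([d,e]@v) ([d,e]@v')"
proof -
  from split2[OF assms] show ?thesis
  proof
    assume "\<exists>L'. td_step (u@[a,b]) (L'@[a,b]) \<and> Y = L'@[a,b]@(w @ [d,e] @ v)"
    then show ?thesis by blast
  next
    assume "\<exists>R'. td_step ([a,b]@w @ [d,e] @ v) ([a,b]@R') \<and> Y = u@[a,b]@R'"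
    then obtain R' where r: "td_step (([a,b]@w) @ [d,e] @ v) ([a,b]@R')" "Y = u@[a,b]@R'" by auto
    from split2[OF r(1)] show ?thesis
    proof
      assume "\<exists>L'. td_step (([a,b]@w)@[d,e]) (L'@[d,e]) \<and> [a,b]@R' = L'@[d,e]@v"
      then obtain L' where l: "td_step (([a,b]@w)@[d,e]) (L'@[d,e])" "[a,b]@R' = L'@[d,e]@v" by blast
      have "length (L'@[d,e]) > length (([a,b]@w)@[d,e])" using td_len[OF l(1)] .
      hence "length L' \<ge> 2" by simp
      hence "take 2 L' = [a,b]" using l(2) by (metis append_eq_conv_conj take_append
              append_take_drop_id length_append length_take min.absorb2 take_all_iff take_take
              length_Cons list.size(3) numeral_2_eq_2 One_nat_def)
      hence L': "L' = [a,b] @ drop 2 L'" by (metis append_take_drop_id)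
      have "R' = drop 2 L' @ [d,e] @ v" using l(2) L' by (metis append.assoc same_append_eq)
      moreover have "td_step ([a,b]@w@[d,e]) ([a,b]@drop 2 L'@[d,e])" using l(1) L' by (metis append.assoc)
      ultimately show ?thesis using r(2) by blast
    next
      assume "\<exists>R''. td_step ([d,e]@v) ([d,e]@R'') \<and> [a,b]@R' = ([a,b]@w)@[d,e]@R''"
      then show ?thesis using r(2) by fastforce
    qed
  qed
qed

lemma main3:
  assumes "td_step\<^sup>*\<^sup>* X Y" "X = u @ [a,b] @ w @ [d,e] @ v"
  shows "\<exists>u' w' v'. Y = u' @ [a,b] @ w' @ [d,e] @ v' \<and>
     td_step\<^sup>*\<^sup>* (u@[a,b]) (u'@[a,b]) \<and>
     td_step\<^sup>*\<^sup>* ([a,b]@w@[d,e]) ([a,b]@w'@[d,e]) \<and>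
     td_step\<^sup>*\<^sup>* ([d,e]@v) ([d,e]@v')"
  using assms(1)
proof (induction rule: rtranclp_induct)
  case base
  then show ?case using assms(2) by blast
next
  case (step y z)
  then obtain u' w' v' where a: "y = u' @ [a,b] @ w' @ [d,e] @ v'"
     "td_step\<^sup>*\<^sup>* (u@[a,b]) (u'@[a,b])"
     "td_step\<^sup>*\<^sup>* ([a,b]@w@[d,e]) ([a,b]@w'@[d,e])"
     "td_step\<^sup>*\<^sup>* ([d,e]@v) ([d,e]@v')" by blast
  from step3[of u' a b w' d e v' z] step(2) a(1) obtain u'' w'' v'' where
    b: "z = u'' @ [a,b] @ w'' @ [d,e] @ v''"
     "td_step\<^sup>*\<^sup>* (u'@[a,b]) (u''@[a,b])"
     "td_step\<^sup>*\<^sup>* ([a,b]@w'@[d,e]) ([a,b]@w''@[d,e])"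
     "td_step\<^sup>*\<^sup>* ([d,e]@v') ([d,e]@v'')" by blast
  have "td_step\<^sup>*\<^sup>* (u@[a,b]) (u''@[a,b])" using a(2) b(2) by (rule rtranclp_trans)
  moreover have "td_step\<^sup>*\<^sup>* ([a,b]@w@[d,e]) ([a,b]@w''@[d,e])" using a(3) b(3) by (rule rtranclp_trans)
  moreover have "td_step\<^sup>*\<^sup>* ([d,e]@v) ([d,e]@v'')" using a(4) b(4) by (rule rtranclp_trans)
  ultimately show ?case using b(1) by blast
qed

theorem lemma2:
  fixes q :: nat and x x' r t s :: "nat list" and a b d e :: nat
  assumes "q \<ge> 3"
    and "in_Sigma_star q x"
    and "length x \<ge> 5"
    and "x' \<in> Dstar x"
    and "x = r @ [a, b] @ t @ [d, e] @ s"
    and "a < q" "b < q" "d < q" "e < q"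
    and "in_Sigma_star q r" "in_Sigma_star q t" "in_Sigma_star q s"
    and "t \<noteq> []"
  shows "\<exists>u w v. in_Sigma_star q u \<and> in_Sigma_star q w \<and> in_Sigma_star q v \<and>
           x' = u @ [a, b] @ w @ [d, e] @ v \<and>
           u @ [a, b] \<in> Dstar (r @ [a, b]) \<and>
           [a, b] @ w @ [d, e] \<in> Dstar ([a, b] @ t @ [d, e]) \<and>
           [d, e] @ v \<in> Dstar ([d, e] @ s)"
proof -
  have st: "td_step\<^sup>*\<^sup>* x x'" using assms(4) unfolding Dstar_def by simp
  have sx: "set x' = set x" using star_set[OF st] .
  obtain u w v where m: "x' = u @ [a,b] @ w @ [d,e] @ v"
     "td_step\<^sup>*\<^sup>* (r@[a,b]) (u@[a,b])"
     "td_step\<^sup>*\<^sup>* ([a,b]@t@[d,e]) ([a,b]@w@[d,e])"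
     "td_step\<^sup>*\<^sup>* ([d,e]@s) ([d,e]@v)" using main3[OF st assms(5)] by blast
  have "\<forall>c\<in>set x'. c < q" using sx assms(2) unfolding in_Sigma_star_def by simp
  then have "in_Sigma_star q u \<and> in_Sigma_star q w \<and> in_Sigma_star q v"
    unfolding in_Sigma_star_def m(1) by simp
  then show ?thesis using m unfolding Dstar_def by blast
qed

end
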